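(* Let $\Omega\subseteq\mathbb{R}^n$ be open and let $f\in\mathbb{A}(\Omega)$. If $f$ is H-continuous then $f$ is D-continuous, and if $f$ is D-continuous then $f$ is S-continuous.
   Context: $\overline{\mathbb{R}}=\mathbb{R}\cup\{\pm\infty\}$ and $\mathbb{I}\overline{\mathbb{R}}=\{[\underline a,\overline a]:\underline a,\overline a\in\overline{\mathbb{R}},\ \underline a\le\overline a\}$, with $a\in\overline{\mathbb{R}}$ identified with $[a,a]$. $\mathbb{A}(\Omega)$ is the set of all functions $f:\Omega\to\mathbb{I}\overline{\mathbb{R}}$, written $f=[\underline f,\overline f]$. $B_\delta(x)=\{y\in\Omega:\|x-y\|<\delta\}$. For a dense subset $D\subseteq\Omega$ and $f\in\mathbb{A}(D)$ define $I(D,\Omega,f)(x)=\sup_{\delta>0}\inf\{z\in f(y):y\in B_\delta(x)\cap D\}$, $S(D,\Omega,f)(x)=\inf_{\delta>0}\sup\{z\in f(y):y\in B_\delta(x)\cap D\}$, and $F(D,\Omega,f)(x)=[I(D,\Omega,f)(x),S(D,\Omega,f)(x)]$ for $x\in\Omega$; when $D=\Omega$ write $I(f),S(f),F(f)$. A function $f\in\mathbb{A}(\Omega)$ is S-continuous if $F(f)=f$; D-continuous if $F(D,\Omega,f)=f$ for every dense subset $D$ of $\Omega$ (with $f$ restricted to $D$); H-continuous if for every $g\in\mathbb{A}(\Omega)$ with $g(x)\subseteq f(x)$ for all $x\in\Omega$ one has $F(g)(x)=f(x)$ for all $x\in\Omega$. *)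

theory Defs
  imports "HOL-Analysis.Analysis"
begin

text \<open>Extended-real intervals [a,b] are represented as pairs (a,b) with a \<le> b.
  A function in A(Omega) is a function into such pairs; only its values on Omega matter.\<close>

type_synonym eint = "ereal \<times> ereal"

definition ivl :: "eint \<Rightarrow> ereal set" where
  "ivl a = {z. fst a \<le> z \<and> z \<le> snd a}"

definition AF :: "'a set \<Rightarrow> ('a \<Rightarrow> eint) set" where
  "AF \<Omega> = {f. \<forall>x\<in>\<Omega>. fst (f x) \<le> snd (f x)}"

definition Ball_in :: "'a::metric_space set \<Rightarrow> real \<Rightarrow> 'a \<Rightarrow> 'a set" where
  "Ball_in \<Omega> \<delta> x = {y\<in>\<Omega>. dist x y < \<delta>}"

definition dense_in :: "'a::topological_space set \<Rightarrow> 'a set \<Rightarrow> bool" where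
  "dense_in D \<Omega> \<longleftrightarrow> D \<subseteq> \<Omega> \<and> \<Omega> \<subseteq> closure D"

definition Ilow :: "'a::metric_space set \<Rightarrow> 'a set \<Rightarrow> ('a \<Rightarrow> eint) \<Rightarrow> 'a \<Rightarrow> ereal" where
  "Ilow D \<Omega> f x = (SUP \<delta>\<in>{0<..}. Inf {z. \<exists>y\<in>Ball_in \<Omega> \<delta> x \<inter> D. z \<in> ivl (f y)})"

definition Supp :: "'a::metric_space set \<Rightarrow> 'a set \<Rightarrow> ('a \<Rightarrow> eint) \<Rightarrow> 'a \<Rightarrow> ereal" where
  "Supp D \<Omega> f x = (INF \<delta>\<in>{0<..}. Sup {z. \<exists>y\<in>Ball_in \<Omega> \<delta> x \<inter> D. z \<in> ivl (f y)})"

definition Fop :: "'a::metric_space set \<Rightarrow> 'a set \<Rightarrow> ('a \<Rightarrow> eint) \<Rightarrow> 'a \<Rightarrow> eint" where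
  "Fop D \<Omega> f x = (Ilow D \<Omega> f x, Supp D \<Omega> f x)"

definition S_continuous :: "'a::metric_space set \<Rightarrow> ('a \<Rightarrow> eint) \<Rightarrow> bool" where
  "S_continuous \<Omega> f \<longleftrightarrow> (\<forall>x\<in>\<Omega>. Fop \<Omega> \<Omega> f x = f x)"

definition D_continuous :: "'a::metric_space set \<Rightarrow> ('a \<Rightarrow> eint) \<Rightarrow> bool" where
  "D_continuous \<Omega> f \<longleftrightarrow> (\<forall>D. dense_in D \<Omega> \<longrightarrow> (\<forall>x\<in>\<Omega>. Fop D \<Omega> f x = f x))"

definition H_continuous :: "'a::metric_space set \<Rightarrow> ('a \<Rightarrow> eint) \<Rightarrow> bool" where
  "H_continuous \<Omega> f \<longleftrightarrow> (\<forall>g\<in>AF \<Omega>. (\<forall>x\<in>\<Omega>. ivl (g x) \<subseteq> ivl (f x)) \<longrightarrow>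
       (\<forall>x\<in>\<Omega>. Fop \<Omega> \<Omega> g x = f x))"

end

theory Submission
  imports Defs
begin

lemma ivl_mem_fst: "fst a \<le> snd a \<Longrightarrow> fst a \<in> ivl a"
  by (simp add: ivl_def)
lemma ivl_mem_snd: "fst a \<le> snd a \<Longrightarrow> snd a \<in> ivl a"
  by (simp add: ivl_def)

lemma H_self:
  assumes "H_continuous \<Omega> f" "f \<in> AF \<Omega>" "x \<in> \<Omega>"
  shows "Ilow \<Omega> \<Omega> f x = fst (f x)" "Supp \<Omega> \<Omega> f x = snd (f x)"
proof -
  have "Fop \<Omega> \<Omega> f x = f x" using assms unfolding H_continuous_def by blast
  then show "Ilow \<Omega> \<Omega> f x = fst (f x)" "Supp \<Omega> \<Omega> f x = snd (f x)"
    by (simp_all add: Fop_def prod_eq_iff)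
qed

lemma Ilow_mono: "Ilow \<Omega> \<Omega> f x \<le> Ilow D \<Omega> f x"
proof -
  have "\<And>d. Inf {z. \<exists>y\<in>Ball_in \<Omega> d x \<inter> \<Omega>. z \<in> ivl (f y)} \<le> Inf {z. \<exists>y\<in>Ball_in \<Omega> d x \<inter> D. z \<in> ivl (f y)}"
    by (rule Inf_superset_mono) (auto simp: Ball_in_def)
  then show ?thesis unfolding Ilow_def by (intro SUP_mono) blast
qed

lemma Supp_mono: "Supp D \<Omega> f x \<le> Supp \<Omega> \<Omega> f x"
proof -
  have "\<And>d. Sup {z. \<exists>y\<in>Ball_in \<Omega> d x \<inter> D. z \<in> ivl (f y)} \<le> Sup {z. \<exists>y\<in>Ball_in \<Omega> d x \<inter> \<Omega>. z \<in> ivl (f y)}"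
    by (rule Sup_subset_mono) (auto simp: Ball_in_def)
  then show ?thesis unfolding Supp_def by (intro INF_mono) blast
qed

lemma Ilow_D:
  assumes H: "H_continuous \<Omega> f" and AF: "f \<in> AF \<Omega>" and x: "x \<in> \<Omega>" and D: "dense_in D \<Omega>"
  shows "Ilow D \<Omega> f x = fst (f x)"
proof (rule antisym)
  show "fst (f x) \<le> Ilow D \<Omega> f x" using H_self[OF H AF x] Ilow_mono by metis
  show "Ilow D \<Omega> f x \<le> fst (f x)"
  proof (rule ccontr)
    assume "\<not> ?thesis"
    hence "fst (f x) < Ilow D \<Omega> f x" by simp
    then obtain \<delta> where \<delta>: "\<delta> > 0" and lt: "fst (f x) < Inf {z. \<exists>y\<in>Ball_in \<Omega> \<delta> x \<inter> D. z \<in> ivl (f y)}"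
      unfolding Ilow_def by (auto simp: less_SUP_iff)
    define c where "c = Inf {z. \<exists>y\<in>Ball_in \<Omega> \<delta> x \<inter> D. z \<in> ivl (f y)}"
    have AFx: "\<And>y. y \<in> \<Omega> \<Longrightarrow> fst (f y) \<le> snd (f y)" using AF by (auto simp: AF_def)
    have Dsub: "D \<subseteq> \<Omega>" "\<Omega> \<subseteq> closure D" using D by (auto simp: dense_in_def)
    have cD: "c \<le> fst (f y)" if "y \<in> Ball_in \<Omega> \<delta> x" "y \<in> D" for y
      unfolding c_def using that AFx[of y] ivl_mem_fst[of "f y"] by (auto simp: Ball_in_def intro!: Inf_lower)
    define g where "g y = (if y \<in> D then (fst (f y), fst (f y)) else (snd (f y), snd (f y)))" for y
    have gAF: "g \<in> AF \<Omega>" by (auto simp: AF_def g_def)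
    have gsub: "\<forall>y\<in>\<Omega>. ivl (g y) \<subseteq> ivl (f y)" using AFx by (auto simp: g_def ivl_def)
    have Hg: "\<And>y. y \<in> \<Omega> \<Longrightarrow> Fop \<Omega> \<Omega> g y = f y" using H gAF gsub unfolding H_continuous_def by blast
    have "Ilow \<Omega> \<Omega> g x = fst (f x)" using Hg[OF x] by (simp add: Fop_def prod_eq_iff)
    moreover have "Inf {z. \<exists>y\<in>Ball_in \<Omega> \<delta> x \<inter> \<Omega>. z \<in> ivl (g y)} \<le> Ilow \<Omega> \<Omega> g x"
      unfolding Ilow_def using \<delta> by (intro SUP_upper) auto
    ultimately have "Inf {z. \<exists>y\<in>Ball_in \<Omega> \<delta> x \<inter> \<Omega>. z \<in> ivl (g y)} < c" using lt c_def by auto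
    then obtain z y where y: "y \<in> Ball_in \<Omega> \<delta> x" and z: "z \<in> ivl (g y)" and zc: "z < c"
      by (auto simp: Inf_less_iff)
    have yO: "y \<in> \<Omega>" and dy: "dist x y < \<delta>" using y by (auto simp: Ball_in_def)
    have yD: "y \<notin> D" using cD[OF y] z zc by (auto simp: g_def ivl_def)
    hence hy: "snd (f y) < c" using z zc by (auto simp: g_def ivl_def)
    have "Supp \<Omega> \<Omega> g y = snd (f y)" using Hg[OF yO] by (simp add: Fop_def prod_eq_iff)
    moreover have "c \<le> Supp \<Omega> \<Omega> g y"
      unfolding Supp_def
    proof (rule INF_greatest)
      fix e :: real assume "e \<in> {0<..}"
      hence e: "e > 0" by simp
      have "y \<in> closure D" using yO Dsub by auto
      then obtain d where d: "d \<in> D" "dist d y < min e (\<delta> - dist x y)"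
      proof -
        have "min e (\<delta> - dist x y) > 0" using e dy by simp
        then show ?thesis using that \<open>y \<in> closure D\<close> unfolding closure_approachable by blast
      qed
      have dO: "d \<in> \<Omega>" using d Dsub by auto
      have "dist x d < \<delta>" using d dist_triangle[of x d y] by (simp add: dist_commute)
      hence "c \<le> fst (f d)" using cD[of d] d dO by (auto simp: Ball_in_def)
      also have "fst (f d) \<le> Sup {z. \<exists>y'\<in>Ball_in \<Omega> e y \<inter> \<Omega>. z \<in> ivl (g y')}"
        using d dO by (intro Sup_upper) (auto simp: Ball_in_def g_def ivl_def dist_commute)
      finally show "c \<le> Sup {z. \<exists>y'\<in>Ball_in \<Omega> e y \<inter> \<Omega>. z \<in> ivl (g y')}" .
    qed
    ultimately show False using hy by simp
  qed
qed

lemma Supp_D: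
  assumes H: "H_continuous \<Omega> f" and AF: "f \<in> AF \<Omega>" and x: "x \<in> \<Omega>" and D: "dense_in D \<Omega>"
  shows "Supp D \<Omega> f x = snd (f x)"
proof (rule antisym)
  show "Supp D \<Omega> f x \<le> snd (f x)" using H_self[OF H AF x] Supp_mono by metis
  show "snd (f x) \<le> Supp D \<Omega> f x"
  proof (rule ccontr)
    assume "\<not> ?thesis"
    hence "Supp D \<Omega> f x < snd (f x)" by simp
    then obtain \<delta> where \<delta>: "\<delta> > 0" and lt: "Sup {z. \<exists>y\<in>Ball_in \<Omega> \<delta> x \<inter> D. z \<in> ivl (f y)} < snd (f x)"
      unfolding Supp_def by (auto simp: INF_less_iff)
    define c where "c = Sup {z. \<exists>y\<in>Ball_in \<Omega> \<delta> x \<inter> D. z \<in> ivl (f y)}"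
    have AFx: "\<And>y. y \<in> \<Omega> \<Longrightarrow> fst (f y) \<le> snd (f y)" using AF by (auto simp: AF_def)
    have Dsub: "D \<subseteq> \<Omega>" "\<Omega> \<subseteq> closure D" using D by (auto simp: dense_in_def)
    have cD: "snd (f y) \<le> c" if "y \<in> Ball_in \<Omega> \<delta> x" "y \<in> D" for y
      unfolding c_def using that AFx[of y] ivl_mem_snd[of "f y"] by (auto simp: Ball_in_def intro!: Sup_upper)
    define g where "g y = (if y \<in> D then (snd (f y), snd (f y)) else (fst (f y), fst (f y)))" for y
    have gAF: "g \<in> AF \<Omega>" by (auto simp: AF_def g_def)
    have gsub: "\<forall>y\<in>\<Omega>. ivl (g y) \<subseteq> ivl (f y)" using AFx by (auto simp: g_def ivl_def)
    have Hg: "\<And>y. y \<in> \<Omega> \<Longrightarrow> Fop \<Omega> \<Omega> g y = f y" using H gAF gsub unfolding H_continuous_def by blast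
    have "Supp \<Omega> \<Omega> g x = snd (f x)" using Hg[OF x] by (simp add: Fop_def prod_eq_iff)
    moreover have "Supp \<Omega> \<Omega> g x \<le> Sup {z. \<exists>y\<in>Ball_in \<Omega> \<delta> x \<inter> \<Omega>. z \<in> ivl (g y)}"
      unfolding Supp_def using \<delta> by (intro INF_lower) auto
    ultimately have "c < Sup {z. \<exists>y\<in>Ball_in \<Omega> \<delta> x \<inter> \<Omega>. z \<in> ivl (g y)}" using lt c_def by auto
    then obtain z y where y: "y \<in> Ball_in \<Omega> \<delta> x" and z: "z \<in> ivl (g y)" and zc: "c < z"
      by (auto simp: less_Sup_iff)
    have yO: "y \<in> \<Omega>" and dy: "dist x y < \<delta>" using y by (auto simp: Ball_in_def)
    have yD: "y \<notin> D" using cD[OF y] z zc by (auto simp: g_def ivl_def)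
    hence hy: "c < fst (f y)" using z zc by (auto simp: g_def ivl_def)
    have "Ilow \<Omega> \<Omega> g y = fst (f y)" using Hg[OF yO] by (simp add: Fop_def prod_eq_iff)
    moreover have "Ilow \<Omega> \<Omega> g y \<le> c"
      unfolding Ilow_def
    proof (rule SUP_least)
      fix e :: real assume "e \<in> {0<..}"
      hence e: "e > 0" by simp
      have "y \<in> closure D" using yO Dsub by auto
      then obtain d where d: "d \<in> D" "dist d y < min e (\<delta> - dist x y)"
      proof -
        have "min e (\<delta> - dist x y) > 0" using e dy by simp
        then show ?thesis using that \<open>y \<in> closure D\<close> unfolding closure_approachable by blast
      qed
      have dO: "d \<in> \<Omega>" using d Dsub by auto
      have "dist x d < \<delta>" using d dist_triangle[of x d y] by (simp add: dist_commute)
      hence "snd (f d) \<le> c" using cD[of d] d dO by (auto simp: Ball_in_def)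
      have "Inf {z. \<exists>y'\<in>Ball_in \<Omega> e y \<inter> \<Omega>. z \<in> ivl (g y')} \<le> snd (f d)"
        using d dO by (intro Inf_lower) (auto simp: Ball_in_def g_def ivl_def dist_commute)
      also note \<open>snd (f d) \<le> c\<close>
      finally show "Inf {z. \<exists>y'\<in>Ball_in \<Omega> e y \<inter> \<Omega>. z \<in> ivl (g y')} \<le> c" .
    qed
    ultimately show False using hy by simp
  qed
qed

theorem theorem1:
  fixes \<Omega> :: "(real ^ 'n) set" and f :: "real ^ 'n \<Rightarrow> eint"
  assumes "open \<Omega>" and "f \<in> AF \<Omega>"
  shows "(H_continuous \<Omega> f \<longrightarrow> D_continuous \<Omega> f) \<and> (D_continuous \<Omega> f \<longrightarrow> S_continuous \<Omega> f)"
proof (intro conjI impI)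
  assume "H_continuous \<Omega> f"
  then show "D_continuous \<Omega> f"
    unfolding D_continuous_def Fop_def
  proof (intro allI impI ballI)
    fix D x assume "dense_in D \<Omega>" "x \<in> \<Omega>"
    then show "(Ilow D \<Omega> f x, Supp D \<Omega> f x) = f x"
      using Ilow_D[OF \<open>H_continuous \<Omega> f\<close> assms(2) \<open>x \<in> \<Omega>\<close> \<open>dense_in D \<Omega>\<close>]
        Supp_D[OF \<open>H_continuous \<Omega> f\<close> assms(2) \<open>x \<in> \<Omega>\<close> \<open>dense_in D \<Omega>\<close>] by (simp add: prod_eq_iff)
  qed
next
  assume "D_continuous \<Omega> f"
  moreover have "dense_in \<Omega> \<Omega>" by (auto simp: dense_in_def closure_subset)
  ultimately show "S_continuous \<Omega> f" unfolding D_continuous_def S_continuous_def by blast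
qed

end
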